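(* Let $n\ge2$, let $T=(n;\sigma,\delta,\tau)$ be a normal tridiagonal Toeplitz matrix with $\sigma\tau\ne0$, and let $\lambda_h=\delta+2\sqrt{\sigma\tau}\cos\frac{h\pi}{n+1}$. Then \[ \kappa_{\mathcal T}(\lambda_h)=\sqrt{\frac1n+\frac2{n-1}\cos^2\frac{h\pi}{n+1}},\qquad h=1,\dots,n. \]
   Context: $T=(n;\sigma,\delta,\tau)$ is the $n\times n$ tridiagonal Toeplitz matrix with diagonal $\delta$, superdiagonal $\tau$, subdiagonal $\sigma$. Its eigenvalue $\lambda_h$ has right eigenvector $x_h$, $x_{h,k}=(\sqrt{\sigma/\tau})^k\sin\frac{hk\pi}{n+1}$, and left eigenvector $y_h$, $y_{h,k}=(\sqrt{\bar\tau/\bar\sigma})^k\sin\frac{hk\pi}{n+1}$. Let $\widetilde x_h,\widetilde y_h$ be their normalizations, $\kappa(\lambda_h)=\|x_h\|_2\|y_h\|_2/|y_h^Hx_h|$, $W_h=\widetilde y_h\widetilde x_h^H$, $\mathcal T$ the subspace of $n\times n$ tridiagonal Toeplitz matrices, $W_h|_{\mathcal T}$ the Frobenius-orthogonal projection of $W_h$ onto $\mathcal T$, and $\kappa_{\mathcal T}(\lambda_h)=\kappa(\lambda_h)\|W_h|_{\mathcal T}\|_F$. *)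

theory Defs
  imports Complex_Main
begin

text \<open>Matrices are represented as functions nat => nat => complex, with indices
  ranging over 1..n (entries outside are irrelevant / zero); vectors as nat => complex.\<close>

definition tridiag_toeplitz :: "nat \<Rightarrow> complex \<Rightarrow> complex \<Rightarrow> complex \<Rightarrow> nat \<Rightarrow> nat \<Rightarrow> complex" where
  "tridiag_toeplitz n \<sigma> \<delta> \<tau> i j =
     (if i \<in> {1..n} \<and> j \<in> {1..n} then
        (if i = j then \<delta> else if j = i + 1 then \<tau> else if i = j + 1 then \<sigma> else 0)
      else 0)"

definition is_normal_mat :: "nat \<Rightarrow> (nat \<Rightarrow> nat \<Rightarrow> complex) \<Rightarrow> bool" where
  "is_normal_mat n A \<longleftrightarrow>
     (\<forall>i\<in>{1..n}. \<forall>j\<in>{1..n}.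
        (\<Sum>k=1..n. cnj (A k i) * A k j) = (\<Sum>k=1..n. A i k * cnj (A j k)))"

definition vnorm :: "nat \<Rightarrow> (nat \<Rightarrow> complex) \<Rightarrow> real" where
  "vnorm n x = sqrt (\<Sum>k=1..n. (cmod (x k))\<^sup>2)"

definition vinner :: "nat \<Rightarrow> (nat \<Rightarrow> complex) \<Rightarrow> (nat \<Rightarrow> complex) \<Rightarrow> complex" where
  "vinner n y x = (\<Sum>k=1..n. cnj (y k) * x k)"

text \<open>Right eigenvector x_h with r = sqrt(sigma/tau), left eigenvector y_h with
  s = sqrt(conj tau / conj sigma).\<close>
definition xvec :: "nat \<Rightarrow> complex \<Rightarrow> nat \<Rightarrow> nat \<Rightarrow> complex" where
  "xvec n r h k = r ^ k * complex_of_real (sin (real h * real k * pi / real (n + 1)))"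

definition yvec :: "nat \<Rightarrow> complex \<Rightarrow> nat \<Rightarrow> nat \<Rightarrow> complex" where
  "yvec n s h k = s ^ k * complex_of_real (sin (real h * real k * pi / real (n + 1)))"

definition kappa :: "nat \<Rightarrow> complex \<Rightarrow> complex \<Rightarrow> nat \<Rightarrow> real" where
  "kappa n r s h = vnorm n (xvec n r h) * vnorm n (yvec n s h) / cmod (vinner n (yvec n s h) (xvec n r h))"

definition Wmat :: "nat \<Rightarrow> complex \<Rightarrow> complex \<Rightarrow> nat \<Rightarrow> nat \<Rightarrow> nat \<Rightarrow> complex" where
  "Wmat n r s h i j =
     (if i \<in> {1..n} \<and> j \<in> {1..n} then
        (yvec n s h i / complex_of_real (vnorm n (yvec n s h))) *
        cnj (xvec n r h j / complex_of_real (vnorm n (xvec n r h)))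
      else 0)"

definition frob_inner :: "nat \<Rightarrow> (nat \<Rightarrow> nat \<Rightarrow> complex) \<Rightarrow> (nat \<Rightarrow> nat \<Rightarrow> complex) \<Rightarrow> complex" where
  "frob_inner n A B = (\<Sum>i=1..n. \<Sum>j=1..n. A i j * cnj (B i j))"

definition frob_norm :: "nat \<Rightarrow> (nat \<Rightarrow> nat \<Rightarrow> complex) \<Rightarrow> real" where
  "frob_norm n A = sqrt (\<Sum>i=1..n. \<Sum>j=1..n. (cmod (A i j))\<^sup>2)"

definition tt_space :: "nat \<Rightarrow> (nat \<Rightarrow> nat \<Rightarrow> complex) set" where
  "tt_space n = {A. \<exists>a b c. A = tridiag_toeplitz n a b c}"

definition proj_tt :: "nat \<Rightarrow> (nat \<Rightarrow> nat \<Rightarrow> complex) \<Rightarrow> nat \<Rightarrow> nat \<Rightarrow> complex" where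
  "proj_tt n W = (THE P. P \<in> tt_space n \<and>
      (\<forall>S\<in>tt_space n. frob_inner n (\<lambda>i j. W i j - P i j) S = 0))"

definition kappa_T :: "nat \<Rightarrow> complex \<Rightarrow> complex \<Rightarrow> nat \<Rightarrow> real" where
  "kappa_T n r s h = kappa n r s h * frob_norm n (proj_tt n (Wmat n r s h))"

end

theory Submission imports Defs begin

lemma inner_row:
  assumes "i \<in> {1..n}"
  shows "(\<Sum>j=1..n. X i j * cnj (tridiag_toeplitz n a b c i j)) =
     cnj b * X i i + (if i + 1 \<le> n then cnj c * X i (i+1) else 0)
       + (if 2 \<le> i then cnj a * X i (i-1) else 0)"
proof -
  have "(\<Sum>j=1..n. X i j * cnj (tridiag_toeplitz n a b c i j)) =
     (\<Sum>j=1..n. (if j = i then cnj b * X i i else 0) + (if j = i+1 then cnj c * X i (i+1) else 0)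
        + (if j = i - 1 \<and> 2 \<le> i then cnj a * X i (i-1) else 0))"
    using assms by (intro sum.cong) (auto simp: tridiag_toeplitz_def)
  also have "\<dots> = cnj b * X i i + (if i + 1 \<le> n then cnj c * X i (i+1) else 0)
       + (if 2 \<le> i then cnj a * X i (i-1) else 0)"
    using assms by (simp add: sum.distrib) (auto simp: sum.delta)
  finally show ?thesis .
qed

lemma frob_inner_tt:
  assumes "n \<ge> 1"
  shows "frob_inner n X (tridiag_toeplitz n a b c) =
    cnj b * (\<Sum>i=1..n. X i i) + cnj c * (\<Sum>i=1..n-1. X i (i+1)) + cnj a * (\<Sum>i=1..n-1. X (i+1) i)"
proof -
  have "frob_inner n X (tridiag_toeplitz n a b c) =
     (\<Sum>i=1..n. cnj b * X i i + (if i + 1 \<le> n then cnj c * X i (i+1) else 0)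
       + (if 2 \<le> i then cnj a * X i (i-1) else 0))"
    unfolding frob_inner_def by (intro sum.cong refl inner_row)
  also have "\<dots> = cnj b * (\<Sum>i=1..n. X i i) + (\<Sum>i=1..n. (if i + 1 \<le> n then cnj c * X i (i+1) else 0))
     + (\<Sum>i=1..n. (if 2 \<le> i then cnj a * X i (i-1) else 0))"
    by (simp add: sum.distrib sum_distrib_left)
  also have "(\<Sum>i=1..n. (if i + 1 \<le> n then cnj c * X i (i+1) else 0)) = (\<Sum>i=1..n-1. cnj c * X i (i+1))"
  proof -
    have "{1..n} = {1..n-1} \<union> {n}" using assms by auto
    then show ?thesis using assms by (simp add: sum.If_cases) (intro sum.cong; auto)
  qed
  also have "(\<Sum>i=1..n. (if 2 \<le> i then cnj a * X i (i-1) else 0)) = (\<Sum>i=2..n. cnj a * X i (i-1))"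
    by (simp add: sum.If_cases) (intro sum.cong; auto)
  also have "\<dots> = (\<Sum>i=1..n-1. cnj a * X (i+1) i)"
    using assms sum.shift_bounds_cl_nat_ivl[of "\<lambda>i. cnj a * X i (i-1)" 1 1 "n-1"] by (simp add: numeral_2_eq_2)
  finally show ?thesis by (simp add: sum_distrib_left)
qed

lemma tt_sums:
  assumes "n \<ge> 1"
  shows "(\<Sum>i=1..n. tridiag_toeplitz n a b c i i) = of_nat n * b"
    "(\<Sum>i=1..n-1. tridiag_toeplitz n a b c i (i+1)) = of_nat (n-1) * c"
    "(\<Sum>i=1..n-1. tridiag_toeplitz n a b c (i+1) i) = of_nat (n-1) * a"
proof -
  have "(\<Sum>i=1..n. tridiag_toeplitz n a b c i i) = (\<Sum>i=1..n. b)"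
    by (intro sum.cong) (auto simp: tridiag_toeplitz_def)
  then show "(\<Sum>i=1..n. tridiag_toeplitz n a b c i i) = of_nat n * b" by simp
  have "(\<Sum>i=1..n-1. tridiag_toeplitz n a b c i (i+1)) = (\<Sum>i=1..n-1. c)"
    by (intro sum.cong) (auto simp: tridiag_toeplitz_def)
  then show "(\<Sum>i=1..n-1. tridiag_toeplitz n a b c i (i+1)) = of_nat (n-1) * c" by simp
  have "(\<Sum>i=1..n-1. tridiag_toeplitz n a b c (i+1) i) = (\<Sum>i=1..n-1. a)"
    by (intro sum.cong) (auto simp: tridiag_toeplitz_def)
  then show "(\<Sum>i=1..n-1. tridiag_toeplitz n a b c (i+1) i) = of_nat (n-1) * a" by simp
qed

lemma proj_tt_eq:
  fixes W :: "nat \<Rightarrow> nat \<Rightarrow> complex"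
  assumes n2: "n \<ge> 2"
  defines "D \<equiv> (\<Sum>i=1..n. W i i)" and "U \<equiv> (\<Sum>i=1..n-1. W i (i+1))"
    and "L \<equiv> (\<Sum>i=1..n-1. W (i+1) i)"
  shows "proj_tt n W = tridiag_toeplitz n (L / of_nat (n-1)) (D / of_nat n) (U / of_nat (n-1))"
  unfolding proj_tt_def
proof (rule the_equality)
  let ?P = "tridiag_toeplitz n (L / of_nat (n-1)) (D / of_nat n) (U / of_nat (n-1))"
  have n1: "n \<ge> 1" using n2 by simp
  have nz: "(of_nat n :: complex) \<noteq> 0" "(of_nat (n-1) :: complex) \<noteq> 0" using n2 by auto
  show "?P \<in> tt_space n \<and> (\<forall>S\<in>tt_space n. frob_inner n (\<lambda>i j. W i j - ?P i j) S = 0)"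
  proof (intro conjI ballI)
    show "?P \<in> tt_space n" unfolding tt_space_def by blast
    fix S assume "S \<in> tt_space n"
    then obtain a b c where S: "S = tridiag_toeplitz n a b c" unfolding tt_space_def by blast
    show "frob_inner n (\<lambda>i j. W i j - ?P i j) S = 0"
      unfolding S frob_inner_tt[OF n1] sum_subtractf tt_sums[OF n1]
      using nz by (simp add: D_def U_def L_def)
  qed
  fix P assume H: "P \<in> tt_space n \<and> (\<forall>S\<in>tt_space n. frob_inner n (\<lambda>i j. W i j - P i j) S = 0)"
  then obtain a b c where P: "P = tridiag_toeplitz n a b c" unfolding tt_space_def by blast
  have "frob_inner n (\<lambda>i j. W i j - P i j) (tridiag_toeplitz n 0 1 0) = 0"
    "frob_inner n (\<lambda>i j. W i j - P i j) (tridiag_toeplitz n 0 0 1) = 0"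
    "frob_inner n (\<lambda>i j. W i j - P i j) (tridiag_toeplitz n 1 0 0) = 0"
    using H unfolding tt_space_def by blast+
  then have "D - of_nat n * b = 0" "U - of_nat (n-1) * c = 0" "L - of_nat (n-1) * a = 0"
    unfolding P frob_inner_tt[OF n1] sum_subtractf tt_sums[OF n1]
    by (simp_all add: D_def U_def L_def)
  then have "b = D / of_nat n" "c = U / of_nat (n-1)" "a = L / of_nat (n-1)"
    using nz by (simp_all add: field_simps)
  then show "P = ?P" using P by simp
qed

lemma ofr_cmod_sq: "(complex_of_real (cmod z))\<^sup>2 = z * cnj z"
  by (metis complex_norm_square of_real_power)

lemma frob_norm_tt:
  assumes "n \<ge> 1"
  shows "frob_norm n (tridiag_toeplitz n a b c) =
    sqrt (real n * (cmod b)\<^sup>2 + real (n-1) * (cmod c)\<^sup>2 + real (n-1) * (cmod a)\<^sup>2)"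
proof -
  let ?T = "tridiag_toeplitz n a b c"
  have "complex_of_real (\<Sum>i=1..n. \<Sum>j=1..n. (cmod (?T i j))\<^sup>2) = frob_inner n ?T ?T"
    unfolding frob_inner_def of_real_sum complex_norm_square by simp
  also have "\<dots> = complex_of_real (real n * (cmod b)\<^sup>2 + real (n-1) * (cmod c)\<^sup>2 + real (n-1) * (cmod a)\<^sup>2)"
    unfolding frob_inner_tt[OF assms] tt_sums[OF assms]
    by (simp add: ofr_cmod_sq algebra_simps)
  finally show ?thesis unfolding frob_norm_def of_real_eq_iff by simp
qed


lemma normal_cmod:
  assumes "n \<ge> 2" "is_normal_mat n (tridiag_toeplitz n \<sigma> \<delta> \<tau>)"
  shows "cmod \<sigma> = cmod \<tau>"
proof -
  let ?T = "tridiag_toeplitz n \<sigma> \<delta> \<tau>"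
  have "(\<Sum>k=1..n. cnj (?T k 1) * ?T k 1) = (\<Sum>k=1..n. ?T 1 k * cnj (?T 1 k))"
    using assms unfolding is_normal_mat_def by auto
  moreover have "(\<Sum>k=1..n. cnj (?T k 1) * ?T k 1) =
      (\<Sum>k=1..n. (if k = 1 then cnj \<delta> * \<delta> else 0) + (if k = 2 then cnj \<sigma> * \<sigma> else 0))"
    using assms by (intro sum.cong) (auto simp: tridiag_toeplitz_def)
  moreover have "(\<Sum>k=1..n. ?T 1 k * cnj (?T 1 k)) =
      (\<Sum>k=1..n. (if k = 1 then \<delta> * cnj \<delta> else 0) + (if k = 2 then \<tau> * cnj \<tau> else 0))"
    using assms by (intro sum.cong) (auto simp: tridiag_toeplitz_def)
  ultimately have "cnj \<delta> * \<delta> + cnj \<sigma> * \<sigma> = \<delta> * cnj \<delta> + \<tau> * cnj \<tau>"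
    using assms by (simp add: sum.distrib)
  then have "\<sigma> * cnj \<sigma> = \<tau> * cnj \<tau>" by (simp add: mult.commute)
  then have "complex_of_real ((cmod \<sigma>)\<^sup>2) = complex_of_real ((cmod \<tau>)\<^sup>2)"
    by (simp only: complex_norm_square)
  then have "(cmod \<sigma>)\<^sup>2 = (cmod \<tau>)\<^sup>2" using of_real_eq_iff by blast
  then show ?thesis by (simp add: power2_eq_iff_nonneg)
qed


lemma trig_sum:
  fixes a :: real and m :: nat
  assumes "sin (real (Suc m + 1) * a) = 0"
  shows "(\<Sum>k=1..m. sin (real k * a) * sin (real (k+1) * a)) =
         cos a * (\<Sum>k=1..Suc m. (sin (real k * a))\<^sup>2)"
proof -
  define SS where "SS = (\<Sum>k=1..m. sin (real k * a) * sin (real (k+1) * a))"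
  have rec: "sin (real k * a) * (sin (real (k - 1) * a) + sin (real (k+1) * a))
        = 2 * cos a * (sin (real k * a))\<^sup>2" if "k \<ge> 1" for k
  proof -
    have e: "real (k-1) * a = real k * a - a" "real (k+1) * a = real k * a + a"
      using that by (auto simp: of_nat_diff algebra_simps)
    show ?thesis unfolding e by (simp add: sin_add sin_diff power2_eq_square algebra_simps)
  qed
  have "(\<Sum>k=1..Suc m. sin (real k * a) * (sin (real (k - 1) * a) + sin (real (k+1) * a)))
      = 2 * cos a * (\<Sum>k=1..Suc m. (sin (real k * a))\<^sup>2)"
    unfolding sum_distrib_left by (intro sum.cong refl) (use rec in \<open>simp del: of_nat_Suc of_nat_diff\<close>)
  moreover have "(\<Sum>k=1..Suc m. sin (real k * a) * sin (real (k+1) * a)) = SS"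
    using assms by (simp add: SS_def)
  moreover have "(\<Sum>k=1..Suc m. sin (real k * a) * sin (real (k - 1) * a)) = SS"
  proof -
    have "(\<Sum>k=1..Suc m. sin (real k * a) * sin (real (k - 1) * a))
       = (\<Sum>k=Suc 1..Suc m. sin (real k * a) * sin (real (k - 1) * a))"
      by (simp add: sum.atLeast_Suc_atMost)
    also have "\<dots> = (\<Sum>k=1..m. sin (real (k+1) * a) * sin (real k * a))"
      using sum.shift_bounds_cl_Suc_ivl[of "\<lambda>k. sin (real k * a) * sin (real (k - 1) * a)" 1 m]
      by simp
    finally show ?thesis by (simp add: SS_def mult.commute)
  qed
  ultimately have "2 * SS = 2 * cos a * (\<Sum>k=1..Suc m. (sin (real k * a))\<^sup>2)"
    by (simp add: distrib_left sum.distrib)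
  then show ?thesis unfolding SS_def by simp
qed


lemma final_alg:
  fixes N m c :: real assumes "N > 0" "m > 0"
  shows "N * (1 / N)\<^sup>2 + m * (c / m)\<^sup>2 + m * (c / m)\<^sup>2 = 1 / N + 2 / m * c\<^sup>2"
  using assms by (simp add: power2_eq_square field_simps)

theorem corollary3:
  fixes n :: nat and \<sigma> \<delta> \<tau> r s :: complex
  assumes "n \<ge> 2"
    and "\<sigma> * \<tau> \<noteq> 0"
    and "is_normal_mat n (tridiag_toeplitz n \<sigma> \<delta> \<tau>)"
    and "r\<^sup>2 = \<sigma> / \<tau>"
    and "s\<^sup>2 = cnj \<tau> / cnj \<sigma>"
    and "cnj s * r = 1"
  shows "\<forall>h\<in>{1..n}. kappa_T n r s h =
           sqrt (1 / real n + 2 / (real n - 1) * (cos (real h * pi / real (n + 1)))\<^sup>2)"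
proof
  fix h assume h: "h \<in> {1..n}"
  have n2: "n \<ge> 2" and n1: "n \<ge> 1" using assms(1) by auto
  have cs: "cmod \<sigma> = cmod \<tau>" by (rule normal_cmod[OF assms(1,3)])
  have tnz: "\<tau> \<noteq> 0" "\<sigma> \<noteq> 0" using assms(2) by auto
  have "(cmod r)\<^sup>2 = 1"
  proof -
    have "(cmod r)\<^sup>2 = cmod (r\<^sup>2)" by (simp add: norm_power)
    also have "\<dots> = cmod \<sigma> / cmod \<tau>" using assms(4) by (simp add: norm_divide)
    also have "\<dots> = 1" using cs tnz by simp
    finally show ?thesis .
  qed
  then have r1: "cmod r = 1" by (smt (verit) norm_ge_zero power2_eq_1_iff)
  have rcr: "r * cnj r = 1"
    using complex_norm_square[of r] r1 by simp
  have sr: "s = r"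
  proof -
    have "cnj s * r = cnj r * r" using assms(6) rcr by (simp add: mult.commute)
    moreover have "r \<noteq> 0" using r1 by auto
    ultimately have "cnj s = cnj r" by simp
    then show ?thesis by simp
  qed
  define a where "a = real h * pi / real (n + 1)"
  define sn where "sn k = sin (real k * a)" for k :: nat
  have a_pos: "0 < a" using h by (auto simp: a_def field_simps)
  have "pi * real h < pi * real (n+1)" using h by (intro mult_strict_left_mono) auto
  then have a_lt: "a < pi" by (simp add: a_def field_simps)
  have sn_eq: "sin (real h * real k * pi / real (n + 1)) = sn k" for k
    by (simp add: sn_def a_def mult_ac)
  have xv: "xvec n r h k = r ^ k * complex_of_real (sn k)" for k
    unfolding xvec_def sn_eq by simp
  define SQ where "SQ = (\<Sum>k=1..n. (sn k)\<^sup>2)"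
  have SQ_pos: "SQ > 0"
  proof -
    have "(sn 1)\<^sup>2 \<le> SQ" unfolding SQ_def using n1
      by (intro member_le_sum) auto
    moreover have "sn 1 > 0" using a_pos a_lt by (simp add: sn_def sin_gt_zero)
    ultimately show ?thesis by (smt (verit) zero_less_power2)
  qed
  have cm: "(cmod (xvec n r h k))\<^sup>2 = (sn k)\<^sup>2" for k
    by (simp add: xv norm_mult norm_power r1)
  have vn: "vnorm n (xvec n r h) = sqrt SQ"
    by (simp add: vnorm_def cm SQ_def)
  have vin: "vinner n (xvec n r h) (xvec n r h) = complex_of_real SQ"
  proof -
    have "vinner n (xvec n r h) (xvec n r h) = (\<Sum>k=1..n. complex_of_real ((cmod (xvec n r h k))\<^sup>2))"
      unfolding vinner_def by (intro sum.cong refl) (simp add: ofr_cmod_sq mult.commute)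
    then show ?thesis by (simp add: cm SQ_def)
  qed
  have yx: "yvec n r h = xvec n r h" by (simp add: fun_eq_iff yvec_def xvec_def)
  have kap: "kappa n r s h = 1"
    unfolding kappa_def sr yx vn vin using SQ_pos by simp
  have Wm: "Wmat n r r h i j = r ^ i * cnj r ^ j * complex_of_real (sn i * sn j / SQ)"
    if "i \<in> {1..n}" "j \<in> {1..n}" for i j
  proof -
    have "complex_of_real (sqrt SQ) * complex_of_real (sqrt SQ) = complex_of_real SQ"
      using SQ_pos by (simp flip: of_real_mult)
    then show ?thesis using that SQ_pos unfolding Wmat_def yx
      by (simp add: vn xv field_simps)
  qed
  define D where "D = (\<Sum>i=1..n. Wmat n r r h i i)"
  define U where "U = (\<Sum>i=1..n-1. Wmat n r r h i (i+1))"
  define L where "L = (\<Sum>i=1..n-1. Wmat n r r h (i+1) i)"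
  define SS where "SS = (\<Sum>k=1..n-1. sn k * sn (k+1))"
  have rpow: "r ^ i * cnj r ^ i = 1" for i
    by (metis power_mult_distrib power_one rcr)
  have D1: "D = 1"
  proof -
    have "D = (\<Sum>i=1..n. complex_of_real ((sn i)\<^sup>2 / SQ))"
      unfolding D_def by (intro sum.cong refl) (simp add: Wm rpow power2_eq_square)
    also have "\<dots> = complex_of_real (\<Sum>i=1..n. (sn i)\<^sup>2 / SQ)"
      by (rule of_real_sum[symmetric])
    also have "(\<Sum>i=1..n. (sn i)\<^sup>2 / SQ) = 1" using SQ_pos
      unfolding sum_divide_distrib[symmetric] SQ_def[symmetric] by simp
    finally show ?thesis by simp
  qed
  have U1: "U = cnj r * complex_of_real (SS / SQ)"
  proof -
    have "U = (\<Sum>i=1..n-1. cnj r * complex_of_real (sn i * sn (i+1) / SQ))"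
      unfolding U_def
      by (intro sum.cong refl) (auto simp: Wm rpow mult_ac)
    also have "\<dots> = cnj r * complex_of_real (\<Sum>i=1..n-1. sn i * sn (i+1) / SQ)"
      by (simp add: sum_distrib_left)
    also have "\<dots> = cnj r * complex_of_real (SS / SQ)"
      by (simp add: SS_def sum_divide_distrib[symmetric])
    finally show ?thesis .
  qed
  have L1: "L = r * complex_of_real (SS / SQ)"
  proof -
    have "L = (\<Sum>i=1..n-1. r * complex_of_real (sn i * sn (i+1) / SQ))"
      unfolding L_def
      by (intro sum.cong refl) (auto simp: Wm rpow mult_ac)
    also have "\<dots> = r * complex_of_real (\<Sum>i=1..n-1. sn i * sn (i+1) / SQ)"
      by (simp add: sum_distrib_left)
    also have "\<dots> = r * complex_of_real (SS / SQ)"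
      by (simp add: SS_def sum_divide_distrib[symmetric])
    finally show ?thesis .
  qed
  have SSc: "SS / SQ = cos a"
  proof -
    obtain m where m: "n = Suc m" using n1 by (cases n) auto
    have "sin (real (Suc m + 1) * a) = 0"
    proof -
      have "real (Suc m + 1) * a = real h * pi" using m by (simp add: a_def)
      then show ?thesis by (simp add: sin_npi)
    qed
    from trig_sum[OF this] have "SS = cos a * SQ"
      by (simp add: SS_def SQ_def sn_def m)
    then show ?thesis using SQ_pos by simp
  qed
  have "kappa_T n r s h = frob_norm n (tridiag_toeplitz n (L / of_nat (n-1)) (D / of_nat n) (U / of_nat (n-1)))"
    unfolding kappa_T_def sr using proj_tt_eq[OF n2, of "Wmat n r r h"] kap sr
    by (simp add: D_def U_def L_def)
  also have "\<dots> = sqrt (real n * (1 / real n)\<^sup>2 + real (n-1) * (cos a / real (n-1))\<^sup>2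
        + real (n-1) * (cos a / real (n-1))\<^sup>2)"
    unfolding frob_norm_tt[OF n1] D1 U1 L1 SSc
    by (simp add: norm_mult norm_divide r1 power_divide)
  also have "\<dots> = sqrt (1 / real n + 2 / (real n - 1) * (cos (real h * pi / real (n + 1)))\<^sup>2)"
  proof -
    have m: "real (n-1) = real n - 1" "real n - 1 > 0" "real n > 0" using n2 by (auto simp: of_nat_diff)
    have "real n * (1 / real n)\<^sup>2 + real (n-1) * (cos a / real (n-1))\<^sup>2
        + real (n-1) * (cos a / real (n-1))\<^sup>2 = 1 / real n + 2 / (real n - 1) * (cos a)\<^sup>2"
      unfolding m(1) using final_alg[OF m(3) m(2)] by simp
    then show ?thesis by (simp add: a_def)
  qed
  finally show "kappa_T n r s h =
           sqrt (1 / real n + 2 / (real n - 1) * (cos (real h * pi / real (n + 1)))\<^sup>2)" .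
qed

end
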